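(* Let $\varepsilon>0$, $\Omega\subset\mathbb{R}^2$ bounded open, $u\in\mathcal{SF}_\varepsilon(\Omega)$ and $R\in\mathcal{R}_\varepsilon(u)$. Then exactly one of the following holds: (i) $R\in\mathcal{T}_\varepsilon$; (ii) every triangle $T\in\mathcal{T}_\varepsilon$ with $T\subset R$ has two edges in $\mathcal{N}_\varepsilon(u)$; (iii) there are exactly two triangles $T\in\mathcal{T}_\varepsilon$, $T\subset R$, having two edges in $\mathcal{C}_\varepsilon(u)$, and all the other triangles $T\subset R$ of $\mathcal{T}_\varepsilon$ have two edges in $\mathcal{N}_\varepsilon(u)$.
   Context: $\mathcal{L}=\{ae_1+b\hat e_2:a,b\in\mathbb{Z}\}$ with $e_1=(1,0)$, $\hat e_2=\frac12(1,\sqrt3)$, $\mathcal{L}_\varepsilon=\varepsilon\mathcal{L}$; $\mathcal{T}_\varepsilon$ is the set of closed triangles with vertices in $\mathcal{L}_\varepsilon$ pairwise at distance $\varepsilon$; $\mathcal{E}_\varepsilon$ the set of segments $[i,j]$, $i,j\in\mathcal{L}_\varepsilon$, $|i-j|=\varepsilon$. $n=(0,0,1)$; $\mathcal{SF}_\varepsilon(\Omega)$ is the set of $u:\mathcal{L}_\varepsilon\to\mathbb{S}^2$ with $u=n$ on $\mathcal{L}_\varepsilon\setminus\Omega$. $\mathcal{N}_\varepsilon(u)=\{[i,j]\in\mathcal{E}_\varepsilon:u(i)=-u(j)\}$, $\mathcal{C}_\varepsilon(u)=\mathcal{E}_\varepsilon\setminus\mathcal{N}_\varepsilon(u)$. Two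 triangles of $\mathcal{T}_\varepsilon$ are neighbours if their intersection is an edge in $\mathcal{N}_\varepsilon(u)$, and connected if joined by a finite chain of consecutive neighbours. $\mathcal{R}_\varepsilon(u)$ is the set of admissible interpolation regions: unions of pairwise connected triangles of $\mathcal{T}_\varepsilon$ that are maximal with respect to inclusion. *)

theory Defs
  imports "HOL-Analysis.Analysis"
begin

definition e1 :: "real^2" where "e1 = vector [1, 0]"
definition e2hat :: "real^2" where "e2hat = vector [1/2, sqrt 3 / 2]"

definition tri_lattice :: "(real^2) set" where
  "tri_lattice = {of_int a *\<^sub>R e1 + of_int b *\<^sub>R e2hat | a b. True}"

definition lattice_eps :: "real \<Rightarrow> (real^2) set" where
  "lattice_eps \<epsilon> = (\<lambda>x. \<epsilon> *\<^sub>R x) ` tri_lattice"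

definition nvec :: "real^3" where "nvec = vector [0, 0, 1]"

definition triangles_eps :: "real \<Rightarrow> (real^2) set set" where
  "triangles_eps \<epsilon> = {convex hull {a, b, c} | a b c.
      a \<in> lattice_eps \<epsilon> \<and> b \<in> lattice_eps \<epsilon> \<and> c \<in> lattice_eps \<epsilon> \<and>
      dist a b = \<epsilon> \<and> dist b c = \<epsilon> \<and> dist a c = \<epsilon>}"

definition edges_eps :: "real \<Rightarrow> (real^2) set set" where
  "edges_eps \<epsilon> = {closed_segment i j | i j.
      i \<in> lattice_eps \<epsilon> \<and> j \<in> lattice_eps \<epsilon> \<and> dist i j = \<epsilon>}"

text \<open>Admissible spin fields: maps from the lattice to the unit sphere, equal to n off Omega.
  Values of u off the lattice are irrelevant.\<close>
definition SF_eps :: "real \<Rightarrow> (real^2) set \<Rightarrow> (real^2 \<Rightarrow> real^3) set" where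
  "SF_eps \<epsilon> \<Omega> = {u. (\<forall>i \<in> lattice_eps \<epsilon>. norm (u i) = 1) \<and>
                       (\<forall>i \<in> lattice_eps \<epsilon> - \<Omega>. u i = nvec)}"

definition N_eps :: "real \<Rightarrow> (real^2 \<Rightarrow> real^3) \<Rightarrow> (real^2) set set" where
  "N_eps \<epsilon> u = {closed_segment i j | i j.
      i \<in> lattice_eps \<epsilon> \<and> j \<in> lattice_eps \<epsilon> \<and> dist i j = \<epsilon> \<and> u i = - u j}"

definition C_eps :: "real \<Rightarrow> (real^2 \<Rightarrow> real^3) \<Rightarrow> (real^2) set set" where
  "C_eps \<epsilon> u = edges_eps \<epsilon> - N_eps \<epsilon> u"

text \<open>Edges of a triangle: lattice edges contained in it (these are its three sides).\<close>
definition tri_edges :: "real \<Rightarrow> (real^2) set \<Rightarrow> (real^2) set set" where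
  "tri_edges \<epsilon> T = {e \<in> edges_eps \<epsilon>. e \<subseteq> T}"

definition neighbours :: "real \<Rightarrow> (real^2 \<Rightarrow> real^3) \<Rightarrow> (real^2) set \<Rightarrow> (real^2) set \<Rightarrow> bool" where
  "neighbours \<epsilon> u T1 T2 \<longleftrightarrow> T1 \<in> triangles_eps \<epsilon> \<and> T2 \<in> triangles_eps \<epsilon> \<and>
      T1 \<inter> T2 \<in> N_eps \<epsilon> u"

definition tri_connected :: "real \<Rightarrow> (real^2 \<Rightarrow> real^3) \<Rightarrow> (real^2) set \<Rightarrow> (real^2) set \<Rightarrow> bool" where
  "tri_connected \<epsilon> u T1 T2 \<longleftrightarrow> T1 \<in> triangles_eps \<epsilon> \<and> T2 \<in> triangles_eps \<epsilon> \<and>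
      (neighbours \<epsilon> u)\<^sup>*\<^sup>* T1 T2"

definition pc_union :: "real \<Rightarrow> (real^2 \<Rightarrow> real^3) \<Rightarrow> (real^2) set \<Rightarrow> bool" where
  "pc_union \<epsilon> u R \<longleftrightarrow> (\<exists>F. F \<subseteq> triangles_eps \<epsilon> \<and>
      (\<forall>T1\<in>F. \<forall>T2\<in>F. tri_connected \<epsilon> u T1 T2) \<and> R = \<Union>F)"

definition regions_eps :: "real \<Rightarrow> (real^2 \<Rightarrow> real^3) \<Rightarrow> (real^2) set set" where
  "regions_eps \<epsilon> u = {R. pc_union \<epsilon> u R \<and> (\<forall>R'. pc_union \<epsilon> u R' \<and> R \<subseteq> R' \<longrightarrow> R' = R)}"

end

theory Submission
  imports Defs "HOL-Analysis.Analysis"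
begin

definition Pt :: "real \<Rightarrow> real \<Rightarrow> real \<Rightarrow> real^2" where
  "Pt e x y = e *\<^sub>R (x *\<^sub>R e1 + y *\<^sub>R e2hat)"
definition ca :: "real \<Rightarrow> real^2 \<Rightarrow> real" where
  "ca e p = p$1/e - p$2/(e* sqrt 3)"
definition cb :: "real \<Rightarrow> real^2 \<Rightarrow> real" where
  "cb e p = 2*p$2/(e* sqrt 3)"

lemma Pt_1: "Pt e x y $ 1 = e*(x + y/2)"
  by (simp add: Pt_def e1_def e2hat_def algebra_simps)
lemma Pt_2: "Pt e x y $ 2 = e*y* sqrt 3/2"
  by (simp add: Pt_def e1_def e2hat_def algebra_simps)

lemma ca_Pt: "e \<noteq> 0 \<Longrightarrow> ca e (Pt e x y) = x"
  by (simp add: ca_def Pt_1 Pt_2 field_simps)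
lemma cb_Pt: "e \<noteq> 0 \<Longrightarrow> cb e (Pt e x y) = y"
  by (simp add: cb_def Pt_2 field_simps)

lemma Pt_eq_iff: assumes "e \<noteq> 0" shows "p = Pt e x y \<longleftrightarrow> ca e p = x \<and> cb e p = y"
proof
  assume "p = Pt e x y" thus "ca e p = x \<and> cb e p = y" using assms by (simp add: ca_Pt cb_Pt)
next
  assume h: "ca e p = x \<and> cb e p = y"
  have s3: "sqrt 3 \<noteq> 0" by simp
  have "p $ 2 = Pt e x y $ 2" using h assms s3 by (auto simp: Pt_2 cb_def field_simps)
  moreover have "p $ 1 = Pt e x y $ 1"
  proof -
    have "p$1 = e * ca e p + p$2/sqrt 3" using assms s3 by (simp add: ca_def field_simps)
    also have "p$2 = e*y* sqrt 3/2" using \<open>p $ 2 = Pt e x y $ 2\<close> by (simp add: Pt_2)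
    finally show ?thesis using h s3 by (simp add: Pt_1 field_simps)
  qed
  ultimately show "p = Pt e x y" by (simp add: vec_eq_iff forall_2)
qed

lemma Pt_lin3: "u *\<^sub>R Pt e x1 y1 + v *\<^sub>R Pt e x2 y2 + w *\<^sub>R Pt e x3 y3 = Pt e (u * x1 + v * x2 + w * x3) (u * y1 + v * y2 + w * y3)"
  by (simp add: Pt_def algebra_simps)
lemma Pt_lin2: "(1-t) *\<^sub>R Pt e x1 y1 + t *\<^sub>R Pt e x2 y2 = Pt e ((1-t) * x1 + t * x2) ((1-t) * y1 + t * y2)"
  by (simp add: Pt_def algebra_simps)

lemma mem_hull3: assumes "e \<noteq> 0"
  shows "p \<in> convex hull {Pt e x1 y1, Pt e x2 y2, Pt e x3 y3} \<longleftrightarrow>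
   (\<exists>u v w. 0 \<le> u \<and> 0 \<le> v \<and> 0 \<le> w \<and> u+v+w = 1 \<and> ca e p = u * x1 + v * x2 + w * x3 \<and> cb e p = u * y1 + v * y2 + w * y3)"
  unfolding convex_hull_3 Pt_lin3 using Pt_eq_iff[OF assms] by blast

lemma mem_seg: assumes "e \<noteq> 0"
  shows "p \<in> closed_segment (Pt e x1 y1) (Pt e x2 y2) \<longleftrightarrow>
   (\<exists>t. 0 \<le> t \<and> t \<le> 1 \<and> ca e p = (1-t) * x1 + t * x2 \<and> cb e p = (1-t) * y1 + t * y2)"
  unfolding closed_segment_def Pt_lin2 using Pt_eq_iff[OF assms] by blast

lemma dist_Pt: "dist (Pt e x y) (Pt e x' y') = \<bar>e\<bar> * sqrt ((x-x')^2 + (x-x')*(y-y') + (y-y')^2)"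
proof -
  have "dist (Pt e x y) (Pt e x' y') = sqrt ((Pt e x y $1 - Pt e x' y' $1)^2 + (Pt e x y $2 - Pt e x' y' $2)^2)"
    by (simp add: dist_vec_def L2_set_def sum_2 dist_real_def power2_abs)
  also have "(Pt e x y $1 - Pt e x' y' $1)^2 + (Pt e x y $2 - Pt e x' y' $2)^2 = e^2 * ((x-x')^2 + (x-x')*(y-y') + (y-y')^2)"
    by (simp add: Pt_1 Pt_2 power2_eq_square algebra_simps)
  finally show ?thesis by (simp add: real_sqrt_mult)
qed


definition Q :: "real \<Rightarrow> int \<Rightarrow> int \<Rightarrow> real^2" where "Q e a b = Pt e (of_int a) (of_int b)"
definition Up :: "real \<Rightarrow> int \<Rightarrow> int \<Rightarrow> (real^2) set" where
  "Up e a b = convex hull {Q e a b, Q e (a+1) b, Q e a (b+1)}"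
definition Dn :: "real \<Rightarrow> int \<Rightarrow> int \<Rightarrow> (real^2) set" where
  "Dn e a b = convex hull {Q e (a+1) b, Q e a (b+1), Q e (a+1) (b+1)}"
definition Hs :: "real \<Rightarrow> int \<Rightarrow> int \<Rightarrow> (real^2) set" where
  "Hs e a b = closed_segment (Q e a b) (Q e (a+1) b)"
definition Vs :: "real \<Rightarrow> int \<Rightarrow> int \<Rightarrow> (real^2) set" where
  "Vs e a b = closed_segment (Q e a b) (Q e a (b+1))"
definition Gs :: "real \<Rightarrow> int \<Rightarrow> int \<Rightarrow> (real^2) set" where
  "Gs e a b = closed_segment (Q e (a+1) b) (Q e a (b+1))"

lemma ca_Q[simp]: "e \<noteq> 0 \<Longrightarrow> ca e (Q e a b) = of_int a"
  by (simp add: Q_def ca_Pt)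
lemma cb_Q[simp]: "e \<noteq> 0 \<Longrightarrow> cb e (Q e a b) = of_int b"
  by (simp add: Q_def cb_Pt)
lemma Q_inj: "e \<noteq> 0 \<Longrightarrow> Q e a b = Q e c d \<longleftrightarrow> a = c \<and> b = d"
  by (metis ca_Q cb_Q of_int_eq_iff)

lemma mem_Up: assumes "e \<noteq> 0"
  shows "p \<in> Up e a b \<longleftrightarrow> of_int a \<le> ca e p \<and> of_int b \<le> cb e p \<and> ca e p + cb e p \<le> of_int a + of_int b + 1"
proof -
  have "p \<in> Up e a b \<longleftrightarrow> (\<exists>u v w. 0 \<le> u \<and> 0 \<le> v \<and> 0 \<le> w \<and> u+v+w = 1 \<and>
     ca e p = u * of_int a + v * (of_int a + 1) + w * of_int a \<and> cb e p = u * of_int b + v * of_int b + w * (of_int b + 1))"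
    unfolding Up_def Q_def using mem_hull3[OF assms] by simp
  also have "\<dots> \<longleftrightarrow> of_int a \<le> ca e p \<and> of_int b \<le> cb e p \<and> ca e p + cb e p \<le> of_int a + of_int b + 1"
  proof
    assume "\<exists>u v w. 0 \<le> u \<and> 0 \<le> v \<and> 0 \<le> w \<and> u+v+w = 1 \<and>
     ca e p = u * of_int a + v * (of_int a + 1) + w * of_int a \<and> cb e p = u * of_int b + v * of_int b + w * (of_int b + 1)"
    then obtain u v w where h: "0 \<le> u" "0 \<le> v" "0 \<le> w" "u+v+w = 1"
      "ca e p = u * of_int a + v * (of_int a + 1) + w * of_int a" "cb e p = u * of_int b + v * of_int b + w * (of_int b + 1)" by blast
    have "ca e p = (u+v+w) * of_int a + v" "cb e p = (u+v+w) * of_int b + w" using h(5,6) by (simp_all add: algebra_simps)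
    thus "of_int a \<le> ca e p \<and> of_int b \<le> cb e p \<and> ca e p + cb e p \<le> of_int a + of_int b + 1" using h by simp
  next
    assume h: "of_int a \<le> ca e p \<and> of_int b \<le> cb e p \<and> ca e p + cb e p \<le> of_int a + of_int b + 1"
    show "\<exists>u v w. 0 \<le> u \<and> 0 \<le> v \<and> 0 \<le> w \<and> u+v+w = 1 \<and>
     ca e p = u * of_int a + v * (of_int a + 1) + w * of_int a \<and> cb e p = u * of_int b + v * of_int b + w * (of_int b + 1)"
      apply (rule exI[of _ "1 - (ca e p - of_int a) - (cb e p - of_int b)"], rule exI[of _ "ca e p - of_int a"], rule exI[of _ "cb e p - of_int b"])
      using h by (simp add: algebra_simps)
  qed
  finally show ?thesis .
qed

lemma mem_Dn: assumes "e \<noteq> 0"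
  shows "p \<in> Dn e a b \<longleftrightarrow> ca e p \<le> of_int a + 1 \<and> cb e p \<le> of_int b + 1 \<and> of_int a + of_int b + 1 \<le> ca e p + cb e p"
proof -
  have "p \<in> Dn e a b \<longleftrightarrow> (\<exists>u v w. 0 \<le> u \<and> 0 \<le> v \<and> 0 \<le> w \<and> u+v+w = 1 \<and>
     ca e p = u * (of_int a + 1) + v * of_int a + w * (of_int a + 1) \<and> cb e p = u * of_int b + v * (of_int b + 1) + w * (of_int b + 1))"
    unfolding Dn_def Q_def using mem_hull3[OF assms] by simp
  also have "\<dots> \<longleftrightarrow> ca e p \<le> of_int a + 1 \<and> cb e p \<le> of_int b + 1 \<and> of_int a + of_int b + 1 \<le> ca e p + cb e p"
  proof
    assume "\<exists>u v w. 0 \<le> u \<and> 0 \<le> v \<and> 0 \<le> w \<and> u+v+w = 1 \<and>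
     ca e p = u * (of_int a + 1) + v * of_int a + w * (of_int a + 1) \<and> cb e p = u * of_int b + v * (of_int b + 1) + w * (of_int b + 1)"
    then obtain u v w where h: "0 \<le> u" "0 \<le> v" "0 \<le> w" "u+v+w = 1"
      "ca e p = u * (of_int a + 1) + v * of_int a + w * (of_int a + 1)" "cb e p = u * of_int b + v * (of_int b + 1) + w * (of_int b + 1)" by blast
    have "ca e p = (u+v+w) * (of_int a + 1) - v" "cb e p = (u+v+w) * (of_int b + 1) - u" using h(5,6) by (simp_all add: algebra_simps)
    thus "ca e p \<le> of_int a + 1 \<and> cb e p \<le> of_int b + 1 \<and> of_int a + of_int b + 1 \<le> ca e p + cb e p" using h by simp
  next
    assume h: "ca e p \<le> of_int a + 1 \<and> cb e p \<le> of_int b + 1 \<and> of_int a + of_int b + 1 \<le> ca e p + cb e p"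
    show "\<exists>u v w. 0 \<le> u \<and> 0 \<le> v \<and> 0 \<le> w \<and> u+v+w = 1 \<and>
     ca e p = u * (of_int a + 1) + v * of_int a + w * (of_int a + 1) \<and> cb e p = u * of_int b + v * (of_int b + 1) + w * (of_int b + 1)"
      apply (rule exI[of _ "of_int b + 1 - cb e p"], rule exI[of _ "of_int a + 1 - ca e p"], rule exI[of _ "ca e p + cb e p - of_int a - of_int b - 1"])
      using h by (simp add: algebra_simps)
  qed
  finally show ?thesis .
qed

lemma mem_Hs: assumes "e \<noteq> 0"
  shows "p \<in> Hs e a b \<longleftrightarrow> cb e p = of_int b \<and> of_int a \<le> ca e p \<and> ca e p \<le> of_int a + 1"
proof -
  have "p \<in> Hs e a b \<longleftrightarrow> (\<exists>t. 0 \<le> t \<and> t \<le> 1 \<and> ca e p = (1-t) * of_int a + t * (of_int a + 1) \<and> cb e p = (1-t) * of_int b + t * of_int b)"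
    unfolding Hs_def Q_def using mem_seg[OF assms] by simp
  also have "\<dots> \<longleftrightarrow> cb e p = of_int b \<and> of_int a \<le> ca e p \<and> ca e p \<le> of_int a + 1"
    apply (rule iffI)
     apply (auto simp: algebra_simps)[1]
    apply (rule exI[of _ "ca e p - of_int a"]) by (auto simp: algebra_simps)
  finally show ?thesis .
qed

lemma mem_Vs: assumes "e \<noteq> 0"
  shows "p \<in> Vs e a b \<longleftrightarrow> ca e p = of_int a \<and> of_int b \<le> cb e p \<and> cb e p \<le> of_int b + 1"
proof -
  have "p \<in> Vs e a b \<longleftrightarrow> (\<exists>t. 0 \<le> t \<and> t \<le> 1 \<and> ca e p = (1-t) * of_int a + t * of_int a \<and> cb e p = (1-t) * of_int b + t * (of_int b + 1))"
    unfolding Vs_def Q_def using mem_seg[OF assms] by simp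
  also have "\<dots> \<longleftrightarrow> ca e p = of_int a \<and> of_int b \<le> cb e p \<and> cb e p \<le> of_int b + 1"
    apply (rule iffI)
     apply (auto simp: algebra_simps)[1]
    apply (rule exI[of _ "cb e p - of_int b"]) by (auto simp: algebra_simps)
  finally show ?thesis .
qed

lemma mem_Gs: assumes "e \<noteq> 0"
  shows "p \<in> Gs e a b \<longleftrightarrow> ca e p + cb e p = of_int a + of_int b + 1 \<and> of_int a \<le> ca e p \<and> ca e p \<le> of_int a + 1"
proof -
  have "p \<in> Gs e a b \<longleftrightarrow> (\<exists>t. 0 \<le> t \<and> t \<le> 1 \<and> ca e p = (1-t) * (of_int a + 1) + t * of_int a \<and> cb e p = (1-t) * of_int b + t * (of_int b + 1))"
    unfolding Gs_def Q_def using mem_seg[OF assms] by simp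
  also have "\<dots> \<longleftrightarrow> ca e p + cb e p = of_int a + of_int b + 1 \<and> of_int a \<le> ca e p \<and> ca e p \<le> of_int a + 1"
    apply (rule iffI)
     apply (auto simp: algebra_simps)[1]
    apply (rule exI[of _ "of_int a + 1 - ca e p"]) by (auto simp: algebra_simps)
  finally show ?thesis .
qed

lemma Q_in_Up: "e \<noteq> 0 \<Longrightarrow> Q e c d \<in> Up e a b \<longleftrightarrow> (c = a \<and> d = b) \<or> (c = a+1 \<and> d = b) \<or> (c = a \<and> d = b+1)"
  unfolding mem_Up by auto
lemma Q_in_Dn: "e \<noteq> 0 \<Longrightarrow> Q e c d \<in> Dn e a b \<longleftrightarrow> (c = a+1 \<and> d = b) \<or> (c = a \<and> d = b+1) \<or> (c = a+1 \<and> d = b+1)"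
  unfolding mem_Dn by auto


lemma lattice_Q: "lattice_eps e = {Q e a b | a b. True}"
  unfolding lattice_eps_def tri_lattice_def Q_def Pt_def by auto

lemma dist_Q: assumes "e > 0"
  shows "dist (Q e a b) (Q e c d) = e \<longleftrightarrow> (a-c)^2 + (a-c)*(b-d) + (b-d)^2 = (1::int)"
proof -
  have "dist (Q e a b) (Q e c d) = e * sqrt (of_int ((a-c)^2 + (a-c)*(b-d) + (b-d)^2))"
    unfolding Q_def dist_Pt using assms by simp
  also have "\<dots> = e \<longleftrightarrow> sqrt (of_int ((a-c)^2 + (a-c)*(b-d) + (b-d)^2)) = 1" using assms by simp
  also have "\<dots> \<longleftrightarrow> (a-c)^2 + (a-c)*(b-d) + (b-d)^2 = (1::int)" by (metis real_sqrt_eq_1_iff of_int_eq_1_iff)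
  finally show ?thesis .
qed

lemma unit_int: fixes x y :: int assumes "x^2 + x*y + y^2 = 1"
  shows "(x=1\<and>y=0) \<or> (x=-1\<and>y=0) \<or> (x=0\<and>y=1) \<or> (x=0\<and>y=-1) \<or> (x=1\<and>y=-1) \<or> (x=-1\<and>y=1)"
proof -
  have "(2*x+y)^2 + 3*y^2 = 4" using assms by (simp add: power2_eq_square algebra_simps)
  hence "3*y^2 \<le> 4" by (smt (verit) zero_le_power2)
  hence "y^2 \<le> 1" by simp
  hence y: "\<bar>y\<bar> \<le> 1" by (metis abs_le_square_iff abs_one one_power2)
  have "(2*y+x)^2 + 3*x^2 = 4" using assms by (simp add: power2_eq_square algebra_simps)
  hence "3*x^2 \<le> 4" by (smt (verit) zero_le_power2)
  hence "x^2 \<le> 1" by simp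
  hence x: "\<bar>x\<bar> \<le> 1" by (metis abs_le_square_iff abs_one one_power2)
  have "x \<in> {-1,0,1}" "y \<in> {-1,0,1}" using x y by auto
  thus ?thesis using assms by auto
qed

lemma dist_Q_unit: assumes "e > 0" "dist (Q e a b) (Q e c d) = e"
  shows "(c=a+1\<and>d=b) \<or> (c=a-1\<and>d=b) \<or> (c=a\<and>d=b+1) \<or> (c=a\<and>d=b-1) \<or> (c=a+1\<and>d=b-1) \<or> (c=a-1\<and>d=b+1)"
proof -
  have "(c-a)^2 + (c-a)*(d-b) + (d-b)^2 = (1::int)"
    using assms dist_Q[OF assms(1), of c d a b] by (simp add: dist_commute)
  from unit_int[OF this] show ?thesis by presburger
qed

lemma Hs_edge: "e > 0 \<Longrightarrow> Hs e a b \<in> edges_eps e"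
  unfolding edges_eps_def Hs_def lattice_Q using dist_Q[of e] by fastforce
lemma Vs_edge: "e > 0 \<Longrightarrow> Vs e a b \<in> edges_eps e"
  unfolding edges_eps_def Vs_def lattice_Q using dist_Q[of e] by fastforce
lemma Gs_edge: "e > 0 \<Longrightarrow> Gs e a b \<in> edges_eps e"
  unfolding edges_eps_def Gs_def lattice_Q using dist_Q[of e] by (fastforce simp: power2_eq_square)

lemma edges_iff: assumes "e > 0"
  shows "E \<in> edges_eps e \<longleftrightarrow> (\<exists>a b. E = Hs e a b \<or> E = Vs e a b \<or> E = Gs e a b)"
proof
  assume "E \<in> edges_eps e"
  then obtain a b c d where E: "E = closed_segment (Q e a b) (Q e c d)" and dd: "dist (Q e a b) (Q e c d) = e"
    unfolding edges_eps_def lattice_Q by blast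
  from dist_Q_unit[OF assms dd] show "\<exists>a b. E = Hs e a b \<or> E = Vs e a b \<or> E = Gs e a b"
  proof (elim disjE conjE)
    assume "c = a+1" "d = b" thus ?thesis using E by (auto simp: Hs_def)
  next
    assume "c = a-1" "d = b" thus ?thesis using E
      by (intro exI[of _ "a-1"] exI[of _ b]) (simp add: Hs_def closed_segment_commute)
  next
    assume "c = a" "d = b+1" thus ?thesis using E by (auto simp: Vs_def)
  next
    assume "c = a" "d = b-1" thus ?thesis using E
      by (intro exI[of _ "a"] exI[of _ "b-1"]) (simp add: Vs_def closed_segment_commute)
  next
    assume "c = a+1" "d = b-1" thus ?thesis using E
      by (intro exI[of _ "a"] exI[of _ "b-1"]) (simp add: Gs_def closed_segment_commute)
  next
    assume "c = a-1" "d = b+1" thus ?thesis using E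
      by (intro exI[of _ "a-1"] exI[of _ "b"]) (simp add: Gs_def)
  qed
next
  assume "\<exists>a b. E = Hs e a b \<or> E = Vs e a b \<or> E = Gs e a b"
  thus "E \<in> edges_eps e" using Hs_edge Vs_edge Gs_edge assms by blast
qed

lemma Up_tri: assumes "e > 0" shows "Up e a b \<in> triangles_eps e"
proof -
  have l: "\<And>a b. Q e a b \<in> lattice_eps e" unfolding lattice_Q by blast
  have "dist (Q e a b) (Q e (a+1) b) = e" "dist (Q e (a+1) b) (Q e a (b+1)) = e" "dist (Q e a b) (Q e a (b+1)) = e"
    using dist_Q[OF assms] by simp_all
  thus ?thesis unfolding triangles_eps_def Up_def using l by blast
qed
lemma Dn_tri: assumes "e > 0" shows "Dn e a b \<in> triangles_eps e"
proof -
  have l: "\<And>a b. Q e a b \<in> lattice_eps e" unfolding lattice_Q by blast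
  have "dist (Q e (a+1) b) (Q e a (b+1)) = e" "dist (Q e a (b+1)) (Q e (a+1) (b+1)) = e" "dist (Q e (a+1) b) (Q e (a+1) (b+1)) = e"
    using dist_Q[OF assms] by simp_all
  thus ?thesis unfolding triangles_eps_def Dn_def using l by blast
qed

lemma tri_int: fixes x1 y1 x2 y2 :: int
  assumes "x1^2+x1*y1+y1^2=1" "x2^2+x2*y2+y2^2=1" "(x2-x1)^2+(x2-x1)*(y2-y1)+(y2-y1)^2=1"
  shows "(x1,y1,x2,y2) \<in> {(1,0,0,1),(0,1,1,0),(0,1,-1,1),(-1,1,0,1),(-1,1,-1,0),(-1,0,-1,1),(-1,0,0,-1),(0,-1,-1,0),(0,-1,1,-1),(1,-1,0,-1),(1,-1,1,0),(1,0,1,-1)}"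
  using unit_int[OF assms(1)] unit_int[OF assms(2)] assms(3)
  apply (elim disjE conjE)
  apply (simp_all only:)
  apply simp_all
  done


lemma tri_iff: assumes "e > 0"
  shows "T \<in> triangles_eps e \<longleftrightarrow> (\<exists>a b. T = Up e a b \<or> T = Dn e a b)"
proof
  assume "T \<in> triangles_eps e"
  then obtain a1 a2 b1 b2 c1 c2 where T: "T = convex hull {Q e a1 a2, Q e b1 b2, Q e c1 c2}"
    and d1: "dist (Q e a1 a2) (Q e b1 b2) = e" and d2: "dist (Q e b1 b2) (Q e c1 c2) = e"
    and d3: "dist (Q e a1 a2) (Q e c1 c2) = e"
    unfolding triangles_eps_def lattice_Q by blast
  have q: "Q e a b \<noteq> Q e c d" if "a \<noteq> c" for a b c d using that Q_inj[of e a b c d] assms by auto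
  define x1 where "x1 = b1 - a1"
  define y1 where "y1 = b2 - a2"
  define x2 where "x2 = c1 - a1"
  define y2 where "y2 = c2 - a2"
  have T': "T = convex hull {Q e a1 a2, Q e (a1+x1) (a2+y1), Q e (a1+x2) (a2+y2)}"
    unfolding T x1_def y1_def x2_def y2_def by simp
  have u1: "x1^2+x1*y1+y1^2=1" using dist_Q[OF assms, of b1 b2 a1 a2] d1
    by (simp add: dist_commute x1_def y1_def)
  have u2: "x2^2+x2*y2+y2^2=1" using dist_Q[OF assms, of c1 c2 a1 a2] d3
    by (simp add: dist_commute x2_def y2_def)
  have u3: "(x2-x1)^2+(x2-x1)*(y2-y1)+(y2-y1)^2=1" using dist_Q[OF assms, of c1 c2 b1 b2] d2
    by (simp add: dist_commute x1_def y1_def x2_def y2_def)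
  from tri_int[OF u1 u2 u3]
  show "\<exists>a b. T = Up e a b \<or> T = Dn e a b"
    unfolding T'
    apply (simp only: insert_iff prod.inject singleton_iff empty_iff)
    apply (elim disjE conjE)
    apply (simp_all only:)
    unfolding Up_def Dn_def
    apply (rule exI[of _ "a1"], rule exI[of _ "a2"], rule disjI1, rule arg_cong[of _ _ "\<lambda>S. convex hull S"], auto)[1]
    apply (rule exI[of _ "a1"], rule exI[of _ "a2"], rule disjI1, rule arg_cong[of _ _ "\<lambda>S. convex hull S"], auto)[1]
    apply (rule exI[of _ "a1-1"], rule exI[of _ "a2"], rule disjI2, rule arg_cong[of _ _ "\<lambda>S. convex hull S"], auto)[1]
    apply (rule exI[of _ "a1-1"], rule exI[of _ "a2"], rule disjI2, rule arg_cong[of _ _ "\<lambda>S. convex hull S"], auto)[1]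
    apply (rule exI[of _ "a1-1"], rule exI[of _ "a2"], rule disjI1, rule arg_cong[of _ _ "\<lambda>S. convex hull S"], auto)[1]
    apply (rule exI[of _ "a1-1"], rule exI[of _ "a2"], rule disjI1, rule arg_cong[of _ _ "\<lambda>S. convex hull S"], auto)[1]
    apply (rule exI[of _ "a1-1"], rule exI[of _ "a2-1"], rule disjI2, rule arg_cong[of _ _ "\<lambda>S. convex hull S"], auto)[1]
    apply (rule exI[of _ "a1-1"], rule exI[of _ "a2-1"], rule disjI2, rule arg_cong[of _ _ "\<lambda>S. convex hull S"], auto)[1]
    apply (rule exI[of _ "a1"], rule exI[of _ "a2-1"], rule disjI1, rule arg_cong[of _ _ "\<lambda>S. convex hull S"], auto)[1]
    apply (rule exI[of _ "a1"], rule exI[of _ "a2-1"], rule disjI1, rule arg_cong[of _ _ "\<lambda>S. convex hull S"], auto)[1]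
    apply (rule exI[of _ "a1"], rule exI[of _ "a2-1"], rule disjI2, rule arg_cong[of _ _ "\<lambda>S. convex hull S"], auto)[1]
    apply (rule exI[of _ "a1"], rule exI[of _ "a2-1"], rule disjI2, rule arg_cong[of _ _ "\<lambda>S. convex hull S"], auto)[1]
    done
next
  assume "\<exists>a b. T = Up e a b \<or> T = Dn e a b"
  thus "T \<in> triangles_eps e" using Up_tri Dn_tri assms by blast
qed


lemma int_le_of_real: "real_of_int x \<le> real_of_int y + r \<Longrightarrow> r < 1 \<Longrightarrow> x \<le> y"
proof -
  assume "real_of_int x \<le> real_of_int y + r" "r < 1"
  hence "real_of_int x < real_of_int (y + 1)" by simp
  hence "x < y + 1" by (simp only: of_int_less_iff)
  thus "x \<le> y" by simp
qed

context fixes e :: real assumes epos: "e > 0"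
begin

lemma e0: "e \<noteq> 0" using epos by simp

lemma Q_in_Up': "Q e c d \<in> Up e a b \<longleftrightarrow> (c = a \<and> d = b) \<or> (c = a+1 \<and> d = b) \<or> (c = a \<and> d = b+1)"
  using Q_in_Up[OF e0] .
lemma Q_in_Dn': "Q e c d \<in> Dn e a b \<longleftrightarrow> (c = a+1 \<and> d = b) \<or> (c = a \<and> d = b+1) \<or> (c = a+1 \<and> d = b+1)"
  using Q_in_Dn[OF e0] .

lemma Up_eq: "Up e a b = Up e c d \<longleftrightarrow> a = c \<and> b = d"
proof
  assume h: "Up e a b = Up e c d"
  have "Q e a b \<in> Up e c d" "Q e (a+1) b \<in> Up e c d" "Q e a (b+1) \<in> Up e c d"
    using h[symmetric] by (simp_all add: Q_in_Up')
  thus "a = c \<and> b = d" unfolding Q_in_Up' by auto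
qed simp

lemma Dn_eq: "Dn e a b = Dn e c d \<longleftrightarrow> a = c \<and> b = d"
proof
  assume h: "Dn e a b = Dn e c d"
  have "Q e (a+1) b \<in> Dn e c d" "Q e a (b+1) \<in> Dn e c d" "Q e (a+1) (b+1) \<in> Dn e c d"
    using h[symmetric] by (simp_all add: Q_in_Dn')
  thus "a = c \<and> b = d" unfolding Q_in_Dn' by auto
qed simp

lemma Up_ne_Dn: "Up e a b \<noteq> Dn e c d"
proof
  assume h: "Up e a b = Dn e c d"
  have "Q e a b \<in> Dn e c d" "Q e (a+1) b \<in> Dn e c d" "Q e a (b+1) \<in> Dn e c d"
    using h[symmetric] by (simp_all add: Q_in_Up')
  thus False unfolding Q_in_Dn' by auto
qed

lemma convex_Up: "convex (Up e a b)" unfolding Up_def by simp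
lemma convex_Dn: "convex (Dn e a b)" unfolding Dn_def by simp

lemma seg_sub: "convex S \<Longrightarrow> closed_segment p q \<subseteq> S \<longleftrightarrow> p \<in> S \<and> q \<in> S"
  using closed_segment_subset ends_in_segment by blast

lemma Hs_sub_Up: "Hs e c d \<subseteq> Up e a b \<longleftrightarrow> c = a \<and> d = b"
  unfolding Hs_def seg_sub[OF convex_Up] Q_in_Up' by auto
lemma Vs_sub_Up: "Vs e c d \<subseteq> Up e a b \<longleftrightarrow> c = a \<and> d = b"
  unfolding Vs_def seg_sub[OF convex_Up] Q_in_Up' by auto
lemma Gs_sub_Up: "Gs e c d \<subseteq> Up e a b \<longleftrightarrow> c = a \<and> d = b"
  unfolding Gs_def seg_sub[OF convex_Up] Q_in_Up' by auto
lemma Hs_sub_Dn: "Hs e c d \<subseteq> Dn e a b \<longleftrightarrow> c = a \<and> d = b+1"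
  unfolding Hs_def seg_sub[OF convex_Dn] Q_in_Dn' by auto
lemma Vs_sub_Dn: "Vs e c d \<subseteq> Dn e a b \<longleftrightarrow> c = a+1 \<and> d = b"
  unfolding Vs_def seg_sub[OF convex_Dn] Q_in_Dn' by auto
lemma Gs_sub_Dn: "Gs e c d \<subseteq> Dn e a b \<longleftrightarrow> c = a \<and> d = b"
  unfolding Gs_def seg_sub[OF convex_Dn] Q_in_Dn' by auto

lemma Q_inj': "Q e a b = Q e c d \<longleftrightarrow> a = c \<and> b = d" using Q_inj[OF e0] .

lemma seg_distinct:
  "Hs e a b \<noteq> Vs e c d" "Hs e a b \<noteq> Gs e c d" "Vs e a b \<noteq> Gs e c d"
  unfolding Hs_def Vs_def Gs_def closed_segment_eq doubleton_eq_iff Q_inj' by auto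

lemma tri_edges_Up: "tri_edges e (Up e a b) = {Hs e a b, Vs e a b, Gs e a b}"
proof (rule set_eqI)
  fix E
  show "E \<in> tri_edges e (Up e a b) \<longleftrightarrow> E \<in> {Hs e a b, Vs e a b, Gs e a b}"
  proof
    assume "E \<in> tri_edges e (Up e a b)"
    then obtain c d where "E = Hs e c d \<or> E = Vs e c d \<or> E = Gs e c d" "E \<subseteq> Up e a b"
      unfolding tri_edges_def edges_iff[OF epos] by blast
    thus "E \<in> {Hs e a b, Vs e a b, Gs e a b}" by (auto simp: Hs_sub_Up Vs_sub_Up Gs_sub_Up)
  next
    assume "E \<in> {Hs e a b, Vs e a b, Gs e a b}"
    thus "E \<in> tri_edges e (Up e a b)" unfolding tri_edges_def
      using Hs_edge[OF epos] Vs_edge[OF epos] Gs_edge[OF epos] Hs_sub_Up[of a b a b] Vs_sub_Up[of a b a b] Gs_sub_Up[of a b a b] by auto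
  qed
qed

lemma tri_edges_Dn: "tri_edges e (Dn e a b) = {Hs e a (b+1), Vs e (a+1) b, Gs e a b}"
proof (rule set_eqI)
  fix E
  show "E \<in> tri_edges e (Dn e a b) \<longleftrightarrow> E \<in> {Hs e a (b+1), Vs e (a+1) b, Gs e a b}"
  proof
    assume "E \<in> tri_edges e (Dn e a b)"
    then obtain c d where "E = Hs e c d \<or> E = Vs e c d \<or> E = Gs e c d" "E \<subseteq> Dn e a b"
      unfolding tri_edges_def edges_iff[OF epos] by blast
    thus "E \<in> {Hs e a (b+1), Vs e (a+1) b, Gs e a b}" by (auto simp: Hs_sub_Dn Vs_sub_Dn Gs_sub_Dn)
  next
    assume "E \<in> {Hs e a (b+1), Vs e (a+1) b, Gs e a b}"
    thus "E \<in> tri_edges e (Dn e a b)" unfolding tri_edges_def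
      using Hs_edge[OF epos] Vs_edge[OF epos] Gs_edge[OF epos] Hs_sub_Dn[of a "b+1" a b] Vs_sub_Dn[of "a+1" b a b] Gs_sub_Dn[of a b a b] by auto
  qed
qed

lemma card_tri_edges: "T \<in> triangles_eps e \<Longrightarrow> card (tri_edges e T) = 3"
  unfolding tri_iff[OF epos] using seg_distinct
  by (auto simp: tri_edges_Up tri_edges_Dn card_insert_if seg_distinct[symmetric])

lemma finite_tri_edges: "T \<in> triangles_eps e \<Longrightarrow> finite (tri_edges e T)"
  unfolding tri_iff[OF epos] by (auto simp: tri_edges_Up tri_edges_Dn)

lemma Up_Hs_inter: "Up e c d \<inter> Dn e c (d-1) = Hs e c d"
  by (auto simp: mem_Up[OF e0] mem_Dn[OF e0] mem_Hs[OF e0])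
lemma Up_Vs_inter: "Up e c d \<inter> Dn e (c-1) d = Vs e c d"
  by (auto simp: mem_Up[OF e0] mem_Dn[OF e0] mem_Vs[OF e0])
lemma Up_Gs_inter: "Up e c d \<inter> Dn e c d = Gs e c d"
  by (auto simp: mem_Up[OF e0] mem_Dn[OF e0] mem_Gs[OF e0])

lemma edge_tris_gen:
  assumes "X \<in> triangles_eps e" "Y \<in> triangles_eps e" "X \<noteq> Y" "X \<inter> Y = E"
    "\<And>a b. E \<subseteq> Up e a b \<longleftrightarrow> Up e a b = X \<or> Up e a b = Y"
    "\<And>a b. E \<subseteq> Dn e a b \<longleftrightarrow> Dn e a b = X \<or> Dn e a b = Y"
  shows "\<exists>X Y. X \<in> triangles_eps e \<and> Y \<in> triangles_eps e \<and> X \<noteq> Y \<and> X \<inter> Y = E \<and>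
     (\<forall>T \<in> triangles_eps e. E \<subseteq> T \<longleftrightarrow> T = X \<or> T = Y)"
proof (intro exI conjI ballI)
  fix T assume "T \<in> triangles_eps e"
  then obtain a b where "T = Up e a b \<or> T = Dn e a b" using tri_iff[OF epos] by blast
  thus "E \<subseteq> T \<longleftrightarrow> T = X \<or> T = Y" using assms(5,6) by blast
qed (use assms in auto)

lemma Up_ne_Dn': "Dn e c d \<noteq> Up e a b" using Up_ne_Dn by metis

lemma edge_tris:
  assumes "E \<in> edges_eps e"
  shows "\<exists>X Y. X \<in> triangles_eps e \<and> Y \<in> triangles_eps e \<and> X \<noteq> Y \<and> X \<inter> Y = E \<and>
     (\<forall>T \<in> triangles_eps e. E \<subseteq> T \<longleftrightarrow> T = X \<or> T = Y)"
proof -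
  obtain c d where "E = Hs e c d \<or> E = Vs e c d \<or> E = Gs e c d" using assms edges_iff[OF epos] by blast
  thus ?thesis
  proof (elim disjE)
    assume E: "E = Hs e c d"
    show ?thesis
      by (rule edge_tris_gen[of "Up e c d" "Dn e c (d-1)"])
        (auto simp: E Up_tri[OF epos] Dn_tri[OF epos] Up_ne_Dn Up_ne_Dn' Up_Hs_inter Hs_sub_Up Hs_sub_Dn Up_eq Dn_eq)
  next
    assume E: "E = Vs e c d"
    show ?thesis
      by (rule edge_tris_gen[of "Up e c d" "Dn e (c-1) d"])
        (auto simp: E Up_tri[OF epos] Dn_tri[OF epos] Up_ne_Dn Up_ne_Dn' Up_Vs_inter Vs_sub_Up Vs_sub_Dn Up_eq Dn_eq)
  next
    assume E: "E = Gs e c d"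
    show ?thesis
      by (rule edge_tris_gen[of "Up e c d" "Dn e c d"])
        (auto simp: E Up_tri[OF epos] Dn_tri[OF epos] Up_ne_Dn Up_ne_Dn' Up_Gs_inter Gs_sub_Up Gs_sub_Dn Up_eq Dn_eq)
  qed
qed

end

context fixes e :: real assumes epos: "e > 0"
begin

lemma centroid_exists:
  assumes "T \<in> triangles_eps e"
  shows "\<exists>p\<in>T. \<forall>T'\<in>triangles_eps e. p \<in> T' \<longrightarrow> T' = T"
proof -
  have e0: "e \<noteq> 0" using epos by simp
  obtain a b where "T = Up e a b \<or> T = Dn e a b" using assms tri_iff[OF epos] by blast
  thus ?thesis
  proof
    assume T: "T = Up e a b"
    define p where "p = Pt e (of_int a + 1/3) (of_int b + 1/3)"
    have ca: "ca e p = of_int a + 1/3" and cb: "cb e p = of_int b + 1/3"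
      unfolding p_def using ca_Pt[OF e0] cb_Pt[OF e0] by auto
    have "p \<in> T" unfolding T mem_Up[OF e0] ca cb by simp
    moreover have "T' = T" if "T' \<in> triangles_eps e" "p \<in> T'" for T'
    proof -
      have "\<exists>c d. T' = Up e c d \<or> T' = Dn e c d" using tri_iff[OF epos, of T'] that(1) by simp
      then obtain c d where "T' = Up e c d \<or> T' = Dn e c d" by blast
      thus ?thesis
      proof
        assume T': "T' = Up e c d"
        have h: "of_int c \<le> of_int a + (1/3::real)" "of_int d \<le> of_int b + (1/3::real)"
           "of_int a + 1/3 + (of_int b + 1/3) \<le> of_int c + of_int d + (1::real)"
          using that(2) unfolding T' mem_Up[OF e0] ca cb by auto
        have "c \<le> a" using int_le_of_real[OF h(1)] by simp
        moreover have "d \<le> b" using int_le_of_real[OF h(2)] by simp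
        moreover have "a + b \<le> c + d" using int_le_of_real[of "a+b" "c+d" "1/3"] h(3) by simp
        ultimately show ?thesis unfolding T T' Up_eq[OF epos] by simp
      next
        assume T': "T' = Dn e c d"
        have h: "of_int a + 1/3 \<le> of_int c + (1::real)" "of_int b + 1/3 \<le> of_int d + (1::real)"
           "of_int c + of_int d + 1 \<le> of_int a + 1/3 + (of_int b + (1/3::real))"
          using that(2) unfolding T' mem_Dn[OF e0] ca cb by auto
        have "a \<le> c" using int_le_of_real[of a c "2/3"] h(1) by simp
        moreover have "b \<le> d" using int_le_of_real[of b d "2/3"] h(2) by simp
        moreover have "c + d + 1 \<le> a + b" using int_le_of_real[of "c+d+1" "a+b" "2/3"] h(3) by simp
        ultimately show ?thesis by simp
      qed
    qed
    ultimately show ?thesis by blast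
  next
    assume T: "T = Dn e a b"
    define p where "p = Pt e (of_int a + 2/3) (of_int b + 2/3)"
    have ca: "ca e p = of_int a + 2/3" and cb: "cb e p = of_int b + 2/3"
      unfolding p_def using ca_Pt[OF e0] cb_Pt[OF e0] by auto
    have "p \<in> T" unfolding T mem_Dn[OF e0] ca cb by simp
    moreover have "T' = T" if "T' \<in> triangles_eps e" "p \<in> T'" for T'
    proof -
      have "\<exists>c d. T' = Up e c d \<or> T' = Dn e c d" using tri_iff[OF epos, of T'] that(1) by simp
      then obtain c d where "T' = Up e c d \<or> T' = Dn e c d" by blast
      thus ?thesis
      proof
        assume T': "T' = Up e c d"
        have h: "of_int c \<le> of_int a + (2/3::real)" "of_int d \<le> of_int b + (2/3::real)"
           "of_int a + 2/3 + (of_int b + 2/3) \<le> of_int c + of_int d + (1::real)"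
          using that(2) unfolding T' mem_Up[OF e0] ca cb by auto
        have "c \<le> a" using int_le_of_real[OF h(1)] by simp
        moreover have "d \<le> b" using int_le_of_real[OF h(2)] by simp
        moreover have "a + b + 1 \<le> c + d" using int_le_of_real[of "a+b+1" "c+d" "1/3"] h(3) by simp
        ultimately show ?thesis by simp
      next
        assume T': "T' = Dn e c d"
        have h: "of_int a + 2/3 \<le> of_int c + (1::real)" "of_int b + 2/3 \<le> of_int d + (1::real)"
           "of_int c + of_int d + 1 \<le> of_int a + 2/3 + (of_int b + (2/3::real))"
          using that(2) unfolding T' mem_Dn[OF e0] ca cb by auto
        have "a \<le> c" using int_le_of_real[of a c "1/3"] h(1) by simp
        moreover have "b \<le> d" using int_le_of_real[of b d "1/3"] h(2) by simp
        moreover have "c + d \<le> a + b" using int_le_of_real[of "c+d" "a+b" "1/3"] h(3) by simp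
        ultimately show ?thesis unfolding T T' Dn_eq[OF epos] by simp
      qed
    qed
    ultimately show ?thesis by blast
  qed
qed

lemma tri_cover:
  assumes "T \<in> triangles_eps e" "\<And>T'. T' \<in> F \<Longrightarrow> T' \<in> triangles_eps e" "T \<subseteq> \<Union>F"
  shows "T \<in> F"
proof -
  obtain p where p: "p \<in> T" "\<forall>T'\<in>triangles_eps e. p \<in> T' \<longrightarrow> T' = T"
    using centroid_exists[OF assms(1)] by blast
  then obtain T' where "T' \<in> F" "p \<in> T'" using assms(3) by blast
  thus ?thesis using p assms(2) by metis
qed

lemma tri_not_edge: "T \<in> triangles_eps e \<Longrightarrow> T \<notin> edges_eps e"
proof
  assume T: "T \<in> triangles_eps e" and E: "T \<in> edges_eps e"
  obtain X Y where XY: "X \<in> triangles_eps e" "Y \<in> triangles_eps e" "X \<noteq> Y" "X \<inter> Y = T"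
     "\<forall>T' \<in> triangles_eps e. T \<subseteq> T' \<longleftrightarrow> T' = X \<or> T' = Y"
    using edge_tris[OF epos E] by blast
  have "T = X \<or> T = Y" using XY(5) T by blast
  moreover have "T \<subseteq> X" "T \<subseteq> Y" using XY(4) by auto
  moreover have "X \<in> {Y}" if "X \<subseteq> Y" using tri_cover[of X "{Y}"] XY(1,2) that by auto
  moreover have "Y \<in> {X}" if "Y \<subseteq> X" using tri_cover[of Y "{X}"] XY(1,2) that by auto
  ultimately show False using XY(3) by auto
qed

lemma N_sub: "N_eps e u \<subseteq> edges_eps e"
  unfolding N_eps_def edges_eps_def by blast

lemma seg_N: assumes "closed_segment p q \<in> N_eps e u" shows "u p = - u q"
proof -
  obtain i j where "closed_segment i j = closed_segment p q" "u i = - u j" using assms unfolding N_eps_def by blast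
  hence "(i = p \<and> j = q) \<or> (i = q \<and> j = p)" "u i = - u j" by (auto simp: doubleton_eq_iff)
  thus ?thesis by (metis minus_minus)
qed

lemma three_spins: assumes n: "norm (u X) = 1" shows "\<not> (u X = - u Y \<and> u X = - u Z \<and> u Y = - u Z)"
proof
  assume h: "u X = - u Y \<and> u X = - u Z \<and> u Y = - u Z"
  hence "u X = - u X" by (metis minus_minus)
  hence "u X + u X = 0" by (metis add.right_inverse)
  hence "2 *\<^sub>R u X = 0" by (simp add: scaleR_2)
  hence "u X = 0" by simp
  thus False using n by simp
qed

lemma card_le2: "S \<subseteq> {A,B,C} \<Longrightarrow> \<not> (A \<in> S \<and> B \<in> S \<and> C \<in> S) \<Longrightarrow> card S \<le> (2::nat)"
proof -
  assume "S \<subseteq> {A,B,C}" "\<not> (A \<in> S \<and> B \<in> S \<and> C \<in> S)"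
  then obtain x y where "S \<subseteq> {x,y}" by blast
  hence "card S \<le> card {x,y}" by (simp add: card_mono)
  also have "\<dots> \<le> 2" by (simp add: card_insert_if)
  finally show ?thesis .
qed

lemma Q_lat: "Q e a b \<in> lattice_eps e" unfolding lattice_Q by blast

lemma tri_N_card:
  assumes u: "u \<in> SF_eps e \<Omega>" and T: "T \<in> triangles_eps e"
  shows "card (tri_edges e T \<inter> N_eps e u) \<le> 2"
proof -
  have nu: "norm (u (Q e a b)) = 1" for a b using u Q_lat unfolding SF_eps_def by blast
  obtain a b where "T = Up e a b \<or> T = Dn e a b" using T tri_iff[OF epos] by blast
  thus ?thesis
  proof
    assume T: "T = Up e a b"
    have "\<not> (Hs e a b \<in> N_eps e u \<and> Vs e a b \<in> N_eps e u \<and> Gs e a b \<in> N_eps e u)"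
    proof
      assume "Hs e a b \<in> N_eps e u \<and> Vs e a b \<in> N_eps e u \<and> Gs e a b \<in> N_eps e u"
      hence "u (Q e a b) = - u (Q e (a+1) b)" "u (Q e a b) = - u (Q e a (b+1))" "u (Q e (a+1) b) = - u (Q e a (b+1))"
        using seg_N unfolding Hs_def Vs_def Gs_def by auto
      thus False using three_spins[of u "Q e a b" "Q e (a+1) b" "Q e a (b+1)", OF nu] by blast
    qed
    thus ?thesis unfolding T tri_edges_Up[OF epos]
      by (intro card_le2[of _ "Hs e a b" "Vs e a b" "Gs e a b"]) auto
  next
    assume T: "T = Dn e a b"
    have "\<not> (Hs e a (b+1) \<in> N_eps e u \<and> Vs e (a+1) b \<in> N_eps e u \<and> Gs e a b \<in> N_eps e u)"
    proof
      assume "Hs e a (b+1) \<in> N_eps e u \<and> Vs e (a+1) b \<in> N_eps e u \<and> Gs e a b \<in> N_eps e u"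
      hence "u (Q e a (b+1)) = - u (Q e (a+1) (b+1))" "u (Q e (a+1) b) = - u (Q e (a+1) (b+1))" "u (Q e (a+1) b) = - u (Q e a (b+1))"
        using seg_N unfolding Hs_def Vs_def Gs_def by auto
      hence "u (Q e a (b+1)) = - u (Q e (a+1) (b+1))" "u (Q e a (b+1)) = - u (Q e (a+1) b)" "u (Q e (a+1) (b+1)) = - u (Q e (a+1) b)"
        by (auto simp: minus_equation_iff)
      thus False using three_spins[of u "Q e a (b+1)" "Q e (a+1) (b+1)" "Q e (a+1) b", OF nu] by blast
    qed
    thus ?thesis unfolding T tri_edges_Dn[OF epos]
      by (intro card_le2[of _ "Hs e a (b+1)" "Vs e (a+1) b" "Gs e a b"]) auto
  qed
qed

end

lemma leaves_count:
  fixes adj :: "'a \<Rightarrow> 'a \<Rightarrow> bool"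
  assumes fin: "finite V" and v0: "v0 \<in> V"
    and sym: "\<And>v w. adj v w \<Longrightarrow> adj w v"
    and irr: "\<And>v. \<not> adj v v"
    and clos: "\<And>v w. v \<in> V \<Longrightarrow> adj v w \<Longrightarrow> w \<in> V"
    and conn: "\<And>v. v \<in> V \<Longrightarrow> adj\<^sup>*\<^sup>* v0 v"
    and deg: "\<And>v. v \<in> V \<Longrightarrow> card {w. adj v w} = 1 \<or> card {w. adj v w} = 2"
  shows "card {v\<in>V. card {w. adj v w} = 1} = 0 \<or> card {v\<in>V. card {w. adj v w} = 1} = 2"
proof -
  define N where "N v = {w. adj v w}" for v
  define A where "A = Sigma V N"
  define L where "L = {v\<in>V. card (N v) = 1}"
  have NV: "N v \<subseteq> V" if "v \<in> V" for v using clos that unfolding N_def by blast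
  have finN: "finite (N v)" if "v \<in> V" for v using NV[OF that] fin finite_subset by blast
  have finA: "finite A" unfolding A_def using fin finN by blast
  have cA: "card A = (\<Sum>v\<in>V. card (N v))" unfolding A_def using fin finN by (simp add: card_SigmaI)
  have "(\<Sum>v\<in>V. card (N v)) + card L = (\<Sum>v\<in>V. card (N v) + (if card (N v) = 1 then 1 else 0))"
    unfolding L_def using fin by (simp add: sum.distrib sum.inter_filter[symmetric])
  also have "\<dots> = (\<Sum>v\<in>V. 2)" using deg unfolding N_def by (intro sum.cong) auto
  finally have sumL: "card A + card L = 2 * card V" using cA by simp
  obtain f :: "'a \<Rightarrow> nat" and n where f: "inj_on f V" using finite_imp_inj_to_nat_seg[OF fin] by blast
  define A1 where "A1 = {p\<in>A. f (fst p) < f (snd p)}"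
  define A2 where "A2 = {p\<in>A. f (snd p) < f (fst p)}"
  have memA: "p \<in> A \<longleftrightarrow> fst p \<in> V \<and> adj (fst p) (snd p)" for p unfolding A_def N_def by (cases p) auto
  have "A = A1 \<union> A2"
  proof -
    have "f (fst p) \<noteq> f (snd p)" if "p \<in> A" for p
    proof
      assume "f (fst p) = f (snd p)"
      moreover have "fst p \<in> V" "snd p \<in> V" "adj (fst p) (snd p)" using that memA clos by blast+
      ultimately show False using f irr unfolding inj_on_def by metis
    qed
    thus ?thesis unfolding A1_def A2_def by force
  qed
  moreover have "A1 \<inter> A2 = {}" unfolding A1_def A2_def by auto
  moreover have "card A2 = card A1"
  proof -
    have "(\<lambda>(v,w). (w,v)) ` A1 = A2"
    proof
      show "(\<lambda>(v,w). (w,v)) ` A1 \<subseteq> A2" unfolding A1_def A2_def using memA clos sym by auto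
      show "A2 \<subseteq> (\<lambda>(v,w). (w,v)) ` A1"
      proof
        fix p assume "p \<in> A2"
        then obtain v w where p: "p = (v,w)" "v \<in> V" "adj v w" "f w < f v" unfolding A2_def using memA by (cases p) auto
        have "(w,v) \<in> A1" unfolding A1_def using memA p clos sym by auto
        thus "p \<in> (\<lambda>(v,w). (w,v)) ` A1" using p by force
      qed
    qed
    moreover have "inj_on (\<lambda>(v,w). (w,v)) A1" by (auto simp: inj_on_def)
    ultimately show ?thesis by (metis card_image)
  qed
  ultimately have evA: "card A = 2 * card A1"
    using finA by (metis card_Un_disjoint finite_Un mult_2)
  define d where "d v = (LEAST k. (adj ^^ k) v0 v)" for v
  have ex: "\<exists>w. adj w v \<and> d w < d v" if "v \<in> V" "v \<noteq> v0" for v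
  proof -
    have "\<exists>k. (adj ^^ k) v0 v" using conn[OF that(1)] by (simp add: rtranclp_power)
    hence dv: "(adj ^^ d v) v0 v" unfolding d_def by (rule LeastI_ex)
    have "d v \<noteq> 0" using dv that(2) by (cases "d v") auto
    then obtain k where k: "d v = Suc k" by (cases "d v") auto
    from dv[unfolded k] obtain w where w: "(adj ^^ k) v0 w" "adj w v" by (rule relpowp_Suc_E)
    have "d w \<le> k" unfolding d_def using w(1) by (rule Least_le)
    thus ?thesis using w k by auto
  qed
  define par where "par v = (SOME w. adj w v \<and> d w < d v)" for v
  have par: "adj (par v) v \<and> d (par v) < d v" if "v \<in> V" "v \<noteq> v0" for v
    unfolding par_def using someI_ex[OF ex[OF that]] .
  define W where "W = V - {v0}"
  define g1 where "g1 v = (v, par v)" for v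
  define g2 where "g2 v = (par v, v)" for v
  have sub: "g1 ` W \<union> g2 ` W \<subseteq> A"
  proof -
    have "g1 v \<in> A \<and> g2 v \<in> A" if "v \<in> W" for v
    proof -
      have v: "v \<in> V" "v \<noteq> v0" using that unfolding W_def by auto
      have p: "adj (par v) v" using par[OF v] by blast
      have p2: "adj v (par v)" using sym[OF p] .
      have "par v \<in> V" using clos[OF v(1) p2] .
      thus ?thesis using v p p2 unfolding g1_def g2_def memA by simp
    qed
    thus ?thesis by blast
  qed
  have inj1: "inj_on g1 W" unfolding g1_def inj_on_def by auto
  have inj2: "inj_on g2 W" unfolding g2_def inj_on_def by auto
  have disj: "g1 ` W \<inter> g2 ` W = {}"
  proof -
    have False if "v \<in> W" "w \<in> W" "g1 v = g2 w" for v w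
    proof -
      have "v = par w" "par v = w" using that(3) unfolding g1_def g2_def by auto
      moreover have "d (par v) < d v" "d (par w) < d w" using par that(1,2) unfolding W_def by auto
      ultimately show False by simp
    qed
    thus ?thesis by blast
  qed
  have finW: "finite W" unfolding W_def using fin by simp
  have "card (g1 ` W \<union> g2 ` W) = 2 * card W"
    using card_Un_disjoint[OF finite_imageI[OF finW] finite_imageI[OF finW] disj]
      card_image[OF inj1] card_image[OF inj2] by simp
  moreover have "card (g1 ` W \<union> g2 ` W) \<le> card A" using card_mono[OF finA sub] .
  moreover have "card W = card V - 1" unfolding W_def using fin v0 by simp
  moreover have "card V \<ge> 1" using fin v0 by (metis One_nat_def Suc_leI card_gt_0_iff empty_iff)
  ultimately have "card L \<le> 2" using sumL by linarith
  moreover have "even (card L)"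
  proof -
    have "even (card A + card L)" using sumL by simp
    thus ?thesis using evA by simp
  qed
  ultimately have "card L = 0 \<or> card L = 2" by presburger
  thus ?thesis unfolding L_def N_def .
qed


context fixes e :: real assumes epos: "e > 0"
begin

lemma ca_bound: "\<bar>ca e p\<bar> \<le> 2 * norm p / e"
proof -
  have s: "sqrt 3 \<ge> 1" by simp
  have es: "e \<le> e * sqrt 3" using epos s by simp
  have h2: "\<bar>p$2\<bar> / (e * sqrt 3) \<le> \<bar>p$2\<bar> / e"
    by (rule divide_left_mono) (use es epos s in auto)
  have "\<bar>ca e p\<bar> \<le> \<bar>p$1/e\<bar> + \<bar>p$2/(e * sqrt 3)\<bar>" unfolding ca_def by (rule abs_triangle_ineq4)
  also have "\<dots> = \<bar>p$1\<bar>/e + \<bar>p$2\<bar>/(e * sqrt 3)" using epos by (simp add: abs_divide abs_mult)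
  also have "\<dots> \<le> norm p / e + norm p / e"
    using h2 component_le_norm_cart[of p 1] component_le_norm_cart[of p 2] epos
    by (smt (verit, best) divide_right_mono)
  finally show ?thesis by simp
qed

lemma cb_bound: "\<bar>cb e p\<bar> \<le> 2 * norm p / e"
proof -
  have s: "sqrt 3 \<ge> 1" by simp
  have es: "e \<le> e * sqrt 3" using epos s by simp
  have h2: "\<bar>p$2\<bar> / (e * sqrt 3) \<le> \<bar>p$2\<bar> / e"
    by (rule divide_left_mono) (use es epos s in auto)
  have "\<bar>cb e p\<bar> = 2 * (\<bar>p$2\<bar> / (e * sqrt 3))" unfolding cb_def using epos by (simp add: abs_divide abs_mult)
  also have "\<dots> \<le> 2 * (norm p / e)"
    using h2 component_le_norm_cart[of p 2] epos
    by (smt (verit, best) divide_right_mono)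
  finally show ?thesis by simp
qed

lemma fin_lat: assumes "bounded S" shows "finite {(a,b). Q e a b \<in> S}"
proof -
  obtain M where M: "\<forall>x\<in>S. norm x \<le> M" using assms bounded_iff by blast
  define K where "K = ceiling (2 * M / e)"
  have "(a,b) \<in> {-K..K} \<times> {-K..K}" if "Q e a b \<in> S" for a b
  proof -
    have n: "norm (Q e a b) \<le> M" using M that by blast
    have "2 * norm (Q e a b) / e \<le> 2 * M / e" using n epos by (simp add: divide_right_mono)
    also have "\<dots> \<le> of_int K" unfolding K_def by simp
    finally have k: "2 * norm (Q e a b) / e \<le> of_int K" .
    have "of_int \<bar>a\<bar> \<le> (of_int K :: real)" using ca_bound[of "Q e a b"] k epos by simp
    hence "\<bar>a\<bar> \<le> K" by linarith
    moreover have "of_int \<bar>b\<bar> \<le> (of_int K :: real)" using cb_bound[of "Q e a b"] k epos by simp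
    hence "\<bar>b\<bar> \<le> K" by linarith
    ultimately show ?thesis by auto
  qed
  hence "{(a,b). Q e a b \<in> S} \<subseteq> {-K..K} \<times> {-K..K}" by auto
  thus ?thesis by (rule finite_subset) simp
qed

lemma fin_tris: assumes "bounded S"
  shows "finite {T \<in> triangles_eps e. \<exists>p\<in>T. p \<in> lattice_eps e \<and> p \<in> S}"
proof -
  define F where "F = (\<lambda>(a,b). {Up e a b, Up e (a-1) b, Up e a (b-1), Dn e (a-1) b, Dn e a (b-1), Dn e (a-1) (b-1)})"
  have *: "\<exists>ab\<in>{(a,b). Q e a b \<in> S}. T \<in> F ab" if T: "T \<in> triangles_eps e" "p \<in> T" "p \<in> lattice_eps e" "p \<in> S" for T p
  proof -
    obtain a b where p: "p = Q e a b" using T(3) lattice_Q by blast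
    obtain c d where "T = Up e c d \<or> T = Dn e c d" using T(1) tri_iff[OF epos] by blast
    hence "T \<in> F (a,b)"
    proof
      assume Tc: "T = Up e c d"
      hence "(a = c \<and> b = d) \<or> (a = c+1 \<and> b = d) \<or> (a = c \<and> b = d+1)" using T(2) p Q_in_Up'[OF epos] by simp
      thus ?thesis unfolding F_def Tc by auto
    next
      assume Tc: "T = Dn e c d"
      hence "(a = c+1 \<and> b = d) \<or> (a = c \<and> b = d+1) \<or> (a = c+1 \<and> b = d+1)" using T(2) p Q_in_Dn'[OF epos] by simp
      thus ?thesis unfolding F_def Tc by auto
    qed
    thus "\<exists>ab\<in>{(a,b). Q e a b \<in> S}. T \<in> F ab" using T(4) p by blast
  qed
  have "{T \<in> triangles_eps e. \<exists>p\<in>T. p \<in> lattice_eps e \<and> p \<in> S} \<subseteq> (\<Union>ab\<in>{(a,b). Q e a b \<in> S}. F ab)"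
    using * by blast
  moreover have "finite (\<Union>ab\<in>{(a,b). Q e a b \<in> S}. F ab)"
    using fin_lat[OF assms] unfolding F_def by auto
  ultimately show ?thesis by (rule finite_subset)
qed

lemma N_vertex:
  assumes u: "u \<in> SF_eps e \<Omega>" and E: "E \<in> N_eps e u"
  shows "\<exists>p\<in>E. p \<in> lattice_eps e \<and> p \<in> \<Omega>"
proof -
  obtain i j where ij: "E = closed_segment i j" "i \<in> lattice_eps e" "j \<in> lattice_eps e" "u i = - u j"
    using E unfolding N_eps_def by blast
  have "i \<in> \<Omega> \<or> j \<in> \<Omega>"
  proof (rule ccontr)
    assume "\<not> (i \<in> \<Omega> \<or> j \<in> \<Omega>)"
    hence "u i = nvec" "u j = nvec" using u ij unfolding SF_eps_def by auto
    hence eq: "nvec = - nvec" using ij(4) by simp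
    have "nvec $ 3 = (1::real)" unfolding nvec_def by simp
    moreover have "(- nvec) $ 3 = (-1::real)" unfolding nvec_def by simp
    moreover have "nvec $ 3 = (- nvec) $ 3" using eq by (rule arg_cong)
    ultimately have "(1::real) = -1" by metis
    thus False by simp
  qed
  moreover have "i \<in> E" "j \<in> E" unfolding ij(1) by (simp_all add: ends_in_segment)
  ultimately show ?thesis using ij(2,3) by blast
qed

lemma nb_sym: "neighbours e u T1 T2 \<Longrightarrow> neighbours e u T2 T1"
  unfolding neighbours_def by (simp add: Int_commute)

lemma nb_irr: "\<not> neighbours e u T T"
  unfolding neighbours_def using tri_not_edge[OF epos] N_sub[OF epos] by auto

lemma deg_bij:
  assumes T: "T \<in> triangles_eps e"
  shows "bij_betw (\<lambda>T2. T \<inter> T2) {T2. neighbours e u T T2} (tri_edges e T \<inter> N_eps e u)"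
  unfolding bij_betw_def
proof (intro conjI)
  show "inj_on (\<lambda>T2. T \<inter> T2) {T2. neighbours e u T T2}"
  proof (rule inj_onI)
    fix T2 T3 assume h: "T2 \<in> {T2. neighbours e u T T2}" "T3 \<in> {T2. neighbours e u T T2}" "T \<inter> T2 = T \<inter> T3"
    define E where "E = T \<inter> T2"
    have EN: "E \<in> edges_eps e" using h(1) N_sub[OF epos] unfolding E_def neighbours_def by auto
    obtain X Y where XY: "\<forall>T' \<in> triangles_eps e. E \<subseteq> T' \<longleftrightarrow> T' = X \<or> T' = Y"
      using edge_tris[OF epos EN] by blast
    have TS: "T2 \<in> triangles_eps e" "T3 \<in> triangles_eps e" using h unfolding neighbours_def by auto
    have "E \<subseteq> T" "E \<subseteq> T2" "E \<subseteq> T3" using h(3) unfolding E_def by auto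
    hence "T = X \<or> T = Y" "T2 = X \<or> T2 = Y" "T3 = X \<or> T3 = Y" using XY T TS by auto
    moreover have "T2 \<noteq> T" "T3 \<noteq> T" using h(1,2) nb_irr by auto
    ultimately show "T2 = T3" by auto
  qed
next
  show "(\<lambda>T2. T \<inter> T2) ` {T2. neighbours e u T T2} = tri_edges e T \<inter> N_eps e u"
  proof
    show "(\<lambda>T2. T \<inter> T2) ` {T2. neighbours e u T T2} \<subseteq> tri_edges e T \<inter> N_eps e u"
      unfolding neighbours_def tri_edges_def using N_sub[OF epos] by auto
    show "tri_edges e T \<inter> N_eps e u \<subseteq> (\<lambda>T2. T \<inter> T2) ` {T2. neighbours e u T T2}"
    proof
      fix E assume E: "E \<in> tri_edges e T \<inter> N_eps e u"
      hence EE: "E \<in> edges_eps e" "E \<subseteq> T" "E \<in> N_eps e u" unfolding tri_edges_def by auto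
      obtain X Y where XY: "X \<in> triangles_eps e" "Y \<in> triangles_eps e" "X \<noteq> Y" "X \<inter> Y = E"
        "\<forall>T' \<in> triangles_eps e. E \<subseteq> T' \<longleftrightarrow> T' = X \<or> T' = Y"
        using edge_tris[OF epos EE(1)] by blast
      have "T = X \<or> T = Y" using XY(5) T EE(2) by blast
      then obtain T2 where T2: "T2 \<in> triangles_eps e" "T \<inter> T2 = E"
        using XY by (metis Int_commute)
      hence "neighbours e u T T2" unfolding neighbours_def using T EE(3) by simp
      thus "E \<in> (\<lambda>T2. T \<inter> T2) ` {T2. neighbours e u T T2}" using T2 by force
    qed
  qed
qed

lemma deg_card:
  assumes T: "T \<in> triangles_eps e"
  shows "card {T2. neighbours e u T T2} = card (tri_edges e T \<inter> N_eps e u)"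
    "finite {T2. neighbours e u T T2}"
proof -
  show "card {T2. neighbours e u T T2} = card (tri_edges e T \<inter> N_eps e u)"
    using bij_betw_same_card[OF deg_bij[OF T]] .
  have "finite (tri_edges e T \<inter> N_eps e u)" using finite_tri_edges[OF epos T] by simp
  thus "finite {T2. neighbours e u T T2}" using bij_betw_finite[OF deg_bij[OF T]] by simp
qed

lemma card_C:
  assumes T: "T \<in> triangles_eps e"
  shows "card (tri_edges e T \<inter> C_eps e u) = 3 - card (tri_edges e T \<inter> N_eps e u)"
proof -
  have "tri_edges e T \<inter> C_eps e u = tri_edges e T - N_eps e u"
    unfolding C_eps_def tri_edges_def by auto
  moreover have "finite (tri_edges e T \<inter> N_eps e u)" using finite_tri_edges[OF epos T] by simp
  ultimately show ?thesis using card_Diff_subset_Int[of "tri_edges e T" "N_eps e u"] card_tri_edges[OF epos T] by simp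
qed

end

theorem lemma5p1:
  fixes \<epsilon> :: real and \<Omega> :: "(real^2) set" and u :: "real^2 \<Rightarrow> real^3" and R :: "(real^2) set"
  assumes "\<epsilon> > 0" and "open \<Omega>" and "bounded \<Omega>"
    and "u \<in> SF_eps \<epsilon> \<Omega>" and "R \<in> regions_eps \<epsilon> u"
  defines "P1 \<equiv> R \<in> triangles_eps \<epsilon>"
    and "P2 \<equiv> (\<forall>T \<in> triangles_eps \<epsilon>. T \<subseteq> R \<longrightarrow> card (tri_edges \<epsilon> T \<inter> N_eps \<epsilon> u) = 2)"
    and "P3 \<equiv> (card {T \<in> triangles_eps \<epsilon>. T \<subseteq> R \<and> card (tri_edges \<epsilon> T \<inter> C_eps \<epsilon> u) = 2} = 2 \<and>
              (\<forall>T \<in> triangles_eps \<epsilon>. T \<subseteq> R \<and> card (tri_edges \<epsilon> T \<inter> C_eps \<epsilon> u) \<noteq> 2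
                  \<longrightarrow> card (tri_edges \<epsilon> T \<inter> N_eps \<epsilon> u) = 2))"
  shows "(P1 \<and> \<not> P2 \<and> \<not> P3) \<or> (\<not> P1 \<and> P2 \<and> \<not> P3) \<or> (\<not> P1 \<and> \<not> P2 \<and> P3)"
proof -
  note epos = assms(1)
  define TS where "TS = triangles_eps \<epsilon>"
  define Nb where "Nb = neighbours \<epsilon> u"
  define dg where "dg T = card (tri_edges \<epsilon> T \<inter> N_eps \<epsilon> u)" for T
  have R5: "pc_union \<epsilon> u R" "\<forall>R'. pc_union \<epsilon> u R' \<and> R \<subseteq> R' \<longrightarrow> R' = R"
    using assms(5) unfolding regions_eps_def by simp_all
  have mx: "\<And>R'. pc_union \<epsilon> u R' \<Longrightarrow> R \<subseteq> R' \<Longrightarrow> R' = R" using R5(2) by blast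
  obtain F where F: "F \<subseteq> TS" "\<forall>T1\<in>F. \<forall>T2\<in>F. tri_connected \<epsilon> u T1 T2" "R = \<Union>F"
    using R5(1) unfolding pc_union_def TS_def by blast
  have NbTS: "Nb T1 T2 \<Longrightarrow> T1 \<in> TS \<and> T2 \<in> TS" for T1 T2 unfolding Nb_def neighbours_def TS_def by simp
  have Nbsym: "Nb T1 T2 \<Longrightarrow> Nb T2 T1" for T1 T2 unfolding Nb_def using nb_sym[OF epos] .
  have Nbirr: "\<not> Nb T T" for T unfolding Nb_def using nb_irr[OF epos] .
  have rsym: "Nb\<^sup>*\<^sup>* T1 T2 \<Longrightarrow> Nb\<^sup>*\<^sup>* T2 T1" for T1 T2
    using sympD[OF symp_rtranclp[OF sympI[of Nb, OF Nbsym]]] by blast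
  have "F \<noteq> {}"
  proof
    assume "F = {}"
    hence R0: "R = {}" using F(3) by simp
    have U: "Up \<epsilon> 0 0 \<in> TS" unfolding TS_def using Up_tri[OF epos] .
    have "pc_union \<epsilon> u (Up \<epsilon> 0 0)" unfolding pc_union_def
      by (rule exI[of _ "{Up \<epsilon> 0 0}"]) (use U in \<open>auto simp: tri_connected_def TS_def\<close>)
    hence "Up \<epsilon> 0 0 = {}" using mx R0 by auto
    moreover have "Q \<epsilon> 0 0 \<in> Up \<epsilon> 0 0" using Q_in_Up'[OF epos] by simp
    ultimately show False by simp
  qed
  then obtain T0 where T0: "T0 \<in> F" by blast
  have T0TS: "T0 \<in> TS" using T0 F(1) by blast
  define Comp where "Comp = {T. Nb\<^sup>*\<^sup>* T0 T}"
  have CompTS: "T \<in> TS" if "T \<in> Comp" for T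
  proof -
    have "Nb\<^sup>*\<^sup>* T0 T" using that unfolding Comp_def by simp
    thus ?thesis by (cases rule: rtranclp.cases) (use T0TS NbTS in auto)
  qed
  have FC: "F \<subseteq> Comp" using F(2) T0 unfolding Comp_def tri_connected_def Nb_def by blast
  have "pc_union \<epsilon> u (\<Union>Comp)" unfolding pc_union_def
  proof (rule exI[of _ Comp], intro conjI ballI)
    show "Comp \<subseteq> triangles_eps \<epsilon>" using CompTS unfolding TS_def by blast
    fix T1 T2 assume "T1 \<in> Comp" "T2 \<in> Comp"
    hence h: "Nb\<^sup>*\<^sup>* T0 T1" "Nb\<^sup>*\<^sup>* T0 T2" unfolding Comp_def by simp_all
    have "Nb\<^sup>*\<^sup>* T1 T2" using rtranclp_trans[OF rsym[OF h(1)] h(2)] .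
    thus "tri_connected \<epsilon> u T1 T2" unfolding tri_connected_def Nb_def[symmetric]
      using CompTS \<open>T1 \<in> Comp\<close> \<open>T2 \<in> Comp\<close> unfolding TS_def by blast
  qed simp
  hence RC: "R = \<Union>Comp" using mx FC F(3) by blast
  have sub_iff: "T \<subseteq> R \<longleftrightarrow> T \<in> Comp" if "T \<in> TS" for T
  proof
    assume "T \<subseteq> R"
    thus "T \<in> Comp" using tri_cover[OF epos, of T Comp] that CompTS RC unfolding TS_def by blast
  qed (use RC in blast)
  have degNb: "card {T2. Nb T T2} = dg T" "finite {T2. Nb T T2}" if "T \<in> TS" for T
    using deg_card[OF epos, of T u] that unfolding Nb_def dg_def TS_def by auto
  have cardC: "card (tri_edges \<epsilon> T \<inter> C_eps \<epsilon> u) = 3 - dg T" if "T \<in> TS" for T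
    using card_C[OF epos, of T u] that unfolding dg_def TS_def by auto
  have dg2: "dg T \<le> 2" if "T \<in> TS" for T
    using tri_N_card[OF epos assms(4), of T] that unfolding dg_def TS_def by auto
  have C2: "card (tri_edges \<epsilon> T \<inter> C_eps \<epsilon> u) = 2 \<longleftrightarrow> dg T = 1" if "T \<in> TS" for T
    using cardC[OF that] dg2[OF that] by auto
  have P1: "P1 \<longleftrightarrow> R \<in> TS" unfolding assms(6) TS_def ..
  have P2: "P2 \<longleftrightarrow> (\<forall>T\<in>Comp. dg T = 2)"
    unfolding assms(7) TS_def[symmetric] dg_def[symmetric] using sub_iff CompTS by blast
  have set_eq: "{T \<in> triangles_eps \<epsilon>. T \<subseteq> R \<and> card (tri_edges \<epsilon> T \<inter> C_eps \<epsilon> u) = 2} = {T\<in>Comp. dg T = 1}"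
    unfolding TS_def[symmetric] using sub_iff CompTS C2 by blast
  have P3: "P3 \<longleftrightarrow> card {T\<in>Comp. dg T = 1} = 2 \<and> (\<forall>T\<in>Comp. dg T \<noteq> 1 \<longrightarrow> dg T = 2)"
    unfolding assms(8) set_eq unfolding TS_def[symmetric] dg_def[symmetric] using sub_iff CompTS C2 by blast
  show ?thesis
  proof (cases "dg T0 = 0")
    case True
    have "{T2. Nb T0 T2} = {}" using degNb[OF T0TS] True by simp
    hence "Comp = {T0}" unfolding Comp_def
      by (auto elim: converse_rtranclpE)
    hence R: "R = T0" using RC by simp
    have p1: "P1" using P1 R T0TS by simp
    have p2: "\<not> P2" using P2 True \<open>Comp = {T0}\<close> by simp
    have E0: "{T\<in>Comp. dg T = 1} = {}" using True \<open>Comp = {T0}\<close> by auto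
    have p3: "\<not> P3" unfolding P3 E0 by simp
    show ?thesis using p1 p2 p3 by blast
  next
    case False
    have dg1: "dg T \<ge> 1" if "T \<in> Comp" for T
    proof -
      have "Nb\<^sup>*\<^sup>* T0 T" using that unfolding Comp_def by simp
      hence "T = T0 \<or> (\<exists>T'. Nb T T')"
        by (cases rule: rtranclp.cases) (auto intro: Nbsym)
      thus ?thesis
      proof
        assume "T = T0" thus ?thesis using False by simp
      next
        assume "\<exists>T'. Nb T T'"
        hence "{T2. Nb T T2} \<noteq> {}" by simp
        hence "card {T2. Nb T T2} \<noteq> 0" using degNb(2)[OF CompTS[OF that]] by simp
        thus ?thesis using degNb(1)[OF CompTS[OF that]] by simp
      qed
    qed
    have dg12: "dg T = 1 \<or> dg T = 2" if "T \<in> Comp" for T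
      using dg1[OF that] dg2[OF CompTS[OF that]] by auto
    have T0C: "T0 \<in> Comp" unfolding Comp_def by simp
    have "\<not> P1"
    proof
      assume "P1"
      hence RT: "R \<in> TS" using P1 by simp
      have RinC: "R \<in> Comp" using sub_iff[OF RT] by simp
      have "T0 \<subseteq> R" using T0 F(3) by blast
      hence "T0 \<in> {R}" using tri_cover[OF epos, of T0 "{R}"] T0TS RT unfolding TS_def by auto
      hence T0R: "T0 = R" by simp
      have "{T2. Nb T0 T2} \<noteq> {}" using degNb[OF T0TS] False by (metis card.empty)
      then obtain T1 where T1: "Nb T0 T1" by blast
      hence "T1 \<in> Comp" unfolding Comp_def by simp
      hence "T1 \<subseteq> R" using RC by blast
      hence "T1 \<in> {R}" using tri_cover[OF epos, of T1 "{R}"] NbTS[OF T1] RT unfolding TS_def by auto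
      thus False using T1 T0R Nbirr by simp
    qed
    have finC: "finite Comp"
    proof (rule finite_subset)
      show "Comp \<subseteq> {T \<in> triangles_eps \<epsilon>. \<exists>p\<in>T. p \<in> lattice_eps \<epsilon> \<and> p \<in> \<Omega>}"
      proof
        fix T assume T: "T \<in> Comp"
        have "tri_edges \<epsilon> T \<inter> N_eps \<epsilon> u \<noteq> {}" using dg1[OF T] unfolding dg_def by auto
        then obtain E where E: "E \<in> tri_edges \<epsilon> T" "E \<in> N_eps \<epsilon> u" by blast
        obtain p where "p \<in> E" "p \<in> lattice_eps \<epsilon>" "p \<in> \<Omega>" using N_vertex[OF epos assms(4) E(2)] by blast
        moreover have "E \<subseteq> T" using E(1) unfolding tri_edges_def by simp
        ultimately show "T \<in> {T \<in> triangles_eps \<epsilon>. \<exists>p\<in>T. p \<in> lattice_eps \<epsilon> \<and> p \<in> \<Omega>}"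
          using CompTS[OF T] unfolding TS_def by blast
      qed
      show "finite {T \<in> triangles_eps \<epsilon>. \<exists>p\<in>T. p \<in> lattice_eps \<epsilon> \<and> p \<in> \<Omega>}"
        using fin_tris[OF epos assms(3)] .
    qed
    have lc: "card {v\<in>Comp. card {w. Nb v w} = 1} = 0 \<or> card {v\<in>Comp. card {w. Nb v w} = 1} = 2"
    proof (rule leaves_count[OF finC T0C])
      show "\<And>v w. Nb v w \<Longrightarrow> Nb w v" using Nbsym .
      show "\<And>v. \<not> Nb v v" using Nbirr .
      show "\<And>v w. v \<in> Comp \<Longrightarrow> Nb v w \<Longrightarrow> w \<in> Comp" unfolding Comp_def by auto
      show "\<And>v. v \<in> Comp \<Longrightarrow> Nb\<^sup>*\<^sup>* T0 v" unfolding Comp_def by simp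
      show "\<And>v. v \<in> Comp \<Longrightarrow> card {w. Nb v w} = 1 \<or> card {w. Nb v w} = 2"
        using dg12 degNb CompTS by metis
    qed
    have leq: "{v\<in>Comp. card {w. Nb v w} = 1} = {T\<in>Comp. dg T = 1}" using degNb CompTS by auto
    have finL: "finite {T\<in>Comp. dg T = 1}" using finC by simp
    from lc[unfolded leq] show ?thesis
    proof
      assume L0: "card {T\<in>Comp. dg T = 1} = 0"
      hence "{T\<in>Comp. dg T = 1} = {}" using finL by simp
      hence "P2" using P2 dg12 by blast
      moreover have "\<not> P3" using P3 L0 by simp
      ultimately show ?thesis using \<open>\<not> P1\<close> by blast
    next
      assume L2: "card {T\<in>Comp. dg T = 1} = 2"
      have "P3" using P3 L2 dg12 by blast
      moreover have "{T\<in>Comp. dg T = 1} \<noteq> {}" using L2 by (metis card.empty zero_neq_numeral)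
      hence "\<not> P2" using P2 by auto
      ultimately show ?thesis using \<open>\<not> P1\<close> by blast
    qed
  qed
qed


end
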